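(* Let $X=(v_j)_{j=1}^n$ be a sequence of unit vectors in $\mathbb{C}^d$ whose angles have real parts taking at most $s$ possible values (this includes designs with $2s$ angles, none of which is real). Then $$n=|X|\le\sum_{p+q\le s}\dim H(p,q)=\binom{s+2d-1}{2d-1}+\binom{s+2d-2}{2d-1}.$$
   Context: $\langle z,w\rangle=\sum_iz_i\overline{w_i}$. The angles of $X$ are the inner products $\langle v_j,v_k\rangle$ with $v_j\ne v_k$ (complex numbers $z$ with $|z|\le1$, $z\ne1$). $H(p,q)$ is the space of harmonic polynomials on $\mathbb{C}^d=\mathbb{R}^{2d}$ homogeneous of degree $p$ in $z_1,\ldots,z_d$ and of degree $q$ in $\overline{z_1},\ldots,\overline{z_d}$. *)

theory Defs
  imports "HOL-Analysis.Analysis"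
begin

definition cinner :: "complex^'d \<Rightarrow> complex^'d \<Rightarrow> complex" where
  "cinner z w = (\<Sum>i\<in>UNIV. z $ i * cnj (w $ i))"

definition angle_re_values :: "(nat \<Rightarrow> complex^'d) \<Rightarrow> nat \<Rightarrow> real set" where
  "angle_re_values v n =
     {Re (cinner (v j) (v k)) | j k. j < n \<and> k < n \<and> v j \<noteq> v k}"

end

theory Submission imports Defs "HOL-Library.Function_Algebras" "HOL-Library.Multiset" begin

interpretation fvs: vector_space "(\<lambda>(c::real) (f::'a \<Rightarrow> real) x. c * f x)"
  by unfold_locales (auto simp: fun_eq_iff algebra_simps)

lemma sum_fun_apply: "(sum f A) x = (\<Sum>a\<in>A. f a x)"
  by (induction A rule: infinite_finite_induct) auto

definition coord :: "'d \<times> bool \<Rightarrow> complex^'d \<Rightarrow> real" where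
  "coord c z = (if snd c then Re (z $ fst c) else Im (z $ fst c))"

definition mon :: "('d \<times> bool) multiset \<Rightarrow> complex^'d \<Rightarrow> real" where
  "mon M y = prod_mset (image_mset (\<lambda>c. coord c y) M)"

definition Ms :: "nat \<Rightarrow> ('d \<times> bool) multiset set" where
  "Ms e = multisets_of_size UNIV e"

definition Hspan :: "nat \<Rightarrow> (complex^'d \<Rightarrow> real) set" where
  "Hspan e = fvs.span (mon ` Ms e)"

lemma finite_Ms: "finite (Ms e :: ('d::finite \<times> bool) multiset set)"
  unfolding Ms_def by auto

lemma card_Ms: "card (Ms e :: ('d::finite \<times> bool) multiset set) = (2 * CARD('d) + e - 1) choose e"
  unfolding Ms_def by (subst card_multisets_of_size) (auto simp: card_UNIV_bool mult.commute)

lemma mon_add: "mon (M + N) = mon M * mon N"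
  by (auto simp: fun_eq_iff mon_def)

lemma Ms_add: "M \<in> Ms a \<Longrightarrow> N \<in> Ms b \<Longrightarrow> M + N \<in> Ms (a + b)"
  by (auto simp: Ms_def multisets_of_size_def)

lemma Hspan_mult:
  fixes f g :: "complex^'d::finite \<Rightarrow> real"
  assumes "f \<in> Hspan a" "g \<in> Hspan b"
  shows "f * g \<in> Hspan (a + b)"
proof -
  obtain u where u: "f = (\<Sum>v\<in>mon ` Ms a. (\<lambda>x. u v * v x))"
    using assms(1) unfolding Hspan_def fvs.span_finite[OF finite_imageI[OF finite_Ms]] by auto
  obtain w where w: "g = (\<Sum>v\<in>mon ` Ms b. (\<lambda>x. w v * v x))"
    using assms(2) unfolding Hspan_def fvs.span_finite[OF finite_imageI[OF finite_Ms]] by auto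
  have "f * g = (\<Sum>v\<in>mon ` Ms a. \<Sum>v'\<in>mon ` Ms b. (\<lambda>x. (u v * w v') * (v * v') x))" (is "_ = ?R")
  proof (rule ext)
    fix x
    show "(f * g) x = ?R x"
      unfolding u w times_fun_apply sum_fun_apply sum_product
      by (intro sum.cong refl) (simp add: algebra_simps)
  qed
  also have "\<dots> \<in> Hspan (a + b)"
    unfolding Hspan_def
  proof (intro fvs.span_sum fvs.span_scale fvs.span_base)
    fix v v' :: "complex^'d \<Rightarrow> real" assume "v \<in> mon ` Ms a" "v' \<in> mon ` Ms b"
    then obtain M N where "M \<in> Ms a" "N \<in> Ms b" "v = mon M" "v' = mon N" by auto
    then show "v * v' \<in> mon ` Ms (a + b)"
      by (metis Ms_add image_eqI mon_add)
  qed
  finally show ?thesis .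
qed

lemma Hspan_mult':
  fixes f g :: "complex^'d::finite \<Rightarrow> real"
  assumes "f \<in> Hspan a" "g \<in> Hspan b" "a + b = c"
  shows "f * g \<in> Hspan c"
  using Hspan_mult[OF assms(1,2)] assms(3) by simp

lemma Hspan_add:
  "f \<in> Hspan a \<Longrightarrow> g \<in> Hspan a \<Longrightarrow> f + g \<in> Hspan a"
  unfolding Hspan_def by (rule fvs.span_add)

lemma Hspan_scale:
  "f \<in> Hspan a \<Longrightarrow> (\<lambda>x. c * f x) \<in> Hspan a"
  unfolding Hspan_def by (rule fvs.span_scale)

lemma Hspan_zero: "0 \<in> Hspan a"
  unfolding Hspan_def by (rule fvs.span_zero)

lemma Hspan_const: "(\<lambda>_. c) \<in> (Hspan 0 :: (complex^'d::finite \<Rightarrow> real) set)"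
proof -
  have "mon {#} \<in> (mon ` Ms 0 :: (complex^'d \<Rightarrow> real) set)"
    by (auto simp: Ms_def multisets_of_size_def)
  then have "(\<lambda>x. c * mon {#} x) \<in> (Hspan 0 :: (complex^'d \<Rightarrow> real) set)"
    unfolding Hspan_def by (intro fvs.span_scale fvs.span_base)
  then show ?thesis by (simp add: mon_def)
qed

lemma Hspan_coord: "coord c \<in> Hspan 1"
proof -
  have "mon {#c#} \<in> mon ` Ms 1"
    by (auto simp: Ms_def multisets_of_size_def)
  then have "mon {#c#} \<in> Hspan 1"
    unfolding Hspan_def by (intro fvs.span_base)
  moreover have "mon {#c#} = coord c" by (simp add: mon_def fun_eq_iff)
  ultimately show ?thesis by simp
qed

lemma Hspan_sum: "finite I \<Longrightarrow> (\<And>i. i \<in> I \<Longrightarrow> f i \<in> Hspan a) \<Longrightarrow> sum f I \<in> Hspan a"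
  unfolding Hspan_def by (rule fvs.span_sum)

lemma re_cinner_coord:
  fixes x y :: "complex^'d::finite"
  shows "Re (cinner x y) = (\<Sum>c\<in>UNIV. coord c x * coord c y)"
proof -
  have "(\<Sum>c\<in>UNIV. coord c x * coord c y) = (\<Sum>i\<in>UNIV. \<Sum>b\<in>UNIV. coord (i,b) x * coord (i,b) y)"
    by (simp add: UNIV_Times_UNIV[symmetric] sum.cartesian_product del: UNIV_Times_UNIV)
  also have "\<dots> = (\<Sum>i\<in>UNIV. Re (x$i) * Re (y$i) + Im (x$i) * Im (y$i))"
    by (simp add: UNIV_bool coord_def add.commute)
  finally show ?thesis by (simp add: cinner_def Re_sum)
qed

lemma norm_coord:
  fixes x :: "complex^'d::finite"
  shows "(norm x)^2 = (\<Sum>c\<in>UNIV. coord c x * coord c x)"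
proof -
  have "(norm x)^2 = (\<Sum>i\<in>UNIV. (cmod (x$i))^2)"
    by (simp add: norm_vec_def L2_set_def sum_nonneg)
  also have "\<dots> = (\<Sum>i\<in>UNIV. Re (x$i) * Re (x$i) + Im (x$i) * Im (x$i))"
    by (intro sum.cong refl) (simp add: cmod_power2 flip: power2_eq_square)
  also have "\<dots> = (\<Sum>i\<in>UNIV. \<Sum>b\<in>UNIV. coord (i,b) x * coord (i,b) x)"
    by (simp add: UNIV_bool coord_def add.commute)
  also have "\<dots> = (\<Sum>c\<in>UNIV. coord c x * coord c x)"
    by (simp add: UNIV_Times_UNIV[symmetric] sum.cartesian_product del: UNIV_Times_UNIV)
  finally show ?thesis .
qed

lemma Hspan_lin: "(\<lambda>y. Re (cinner x y)) \<in> Hspan 1"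
proof -
  have "(\<lambda>y. Re (cinner x y)) = (\<Sum>c\<in>UNIV. (\<lambda>y. coord c x * coord c y))"
    by (simp add: fun_eq_iff sum_fun_apply re_cinner_coord)
  also have "\<dots> \<in> Hspan 1"
    by (intro Hspan_sum Hspan_scale Hspan_coord) auto
  finally show ?thesis .
qed

lemma Hspan_norm: "(\<lambda>y::complex^'d::finite. (norm y)^2) \<in> Hspan 2"
proof -
  have "(\<lambda>y::complex^'d. (norm y)^2) = (\<Sum>c\<in>UNIV. coord c * coord c)"
    by (simp add: fun_eq_iff sum_fun_apply norm_coord)
  also have "\<dots> \<in> Hspan 2"
    by (intro Hspan_sum Hspan_mult'[OF Hspan_coord Hspan_coord]) auto
  finally show ?thesis .
qed

definition G :: "nat \<Rightarrow> (complex^'d::finite \<Rightarrow> real) \<Rightarrow> bool" where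
  "G m h \<longleftrightarrow> (\<exists>p q. p \<in> Hspan m \<and> q \<in> Hspan (m - 1) \<and> (\<forall>y. norm y = 1 \<longrightarrow> h y = p y + q y))"

lemma G_step:
  fixes h :: "complex^'d::finite \<Rightarrow> real"
  assumes "G m h" "l \<in> Hspan 1"
  shows "G (Suc m) (\<lambda>y. (l y + \<beta>) * h y)"
proof -
  obtain p q where pq: "p \<in> Hspan m" "q \<in> Hspan (m - 1)" "\<And>y. norm y = 1 \<Longrightarrow> h y = p y + q y"
    using assms(1) unfolding G_def by blast
  let ?N = "\<lambda>y::complex^'d. (norm y)^2"
  show ?thesis
  proof (cases "m = 0")
    case True
    have r: "p + q \<in> Hspan 0" using pq True by (intro Hspan_add) auto
    have "l * (p + q) \<in> Hspan (Suc m)" using Hspan_mult'[OF assms(2) r] True by simp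
    moreover have "(\<lambda>y. \<beta> * (p + q) y) \<in> Hspan (Suc m - 1)" using Hspan_scale[OF r] True by simp
    moreover have "\<forall>y. norm y = 1 \<longrightarrow> (l y + \<beta>) * h y = (l * (p + q)) y + \<beta> * (p + q) y"
      using pq(3) by (simp add: algebra_simps)
    ultimately show ?thesis unfolding G_def by blast
  next
    case False
    have "l * p + (\<lambda>y. \<beta> * (?N * q) y) \<in> Hspan (Suc m)"
      using False by (intro Hspan_add Hspan_scale Hspan_mult'[OF assms(2) pq(1)]
          Hspan_mult'[OF Hspan_norm pq(2)]) auto
    moreover have "l * q + (\<lambda>y. \<beta> * p y) \<in> Hspan (Suc m - 1)"
      using False pq(1) by (intro Hspan_add Hspan_scale Hspan_mult'[OF assms(2) pq(2)]) auto
    moreover have "\<forall>y. norm y = 1 \<longrightarrow> (l y + \<beta>) * h y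
        = (l * p + (\<lambda>y. \<beta> * (?N * q) y)) y + (l * q + (\<lambda>y. \<beta> * p y)) y"
      using pq(3) by (simp add: algebra_simps)
    ultimately show ?thesis unfolding G_def by blast
  qed
qed

lemma G_up:
  fixes h :: "complex^'d::finite \<Rightarrow> real"
  assumes "G m h"
  shows "G (Suc m) h"
proof -
  obtain p q where pq: "p \<in> Hspan m" "q \<in> Hspan (m - 1)" "\<And>y. norm y = 1 \<Longrightarrow> h y = p y + q y"
    using assms(1) unfolding G_def by blast
  let ?N = "\<lambda>y::complex^'d. (norm y)^2"
  show ?thesis
  proof (cases "m = 0")
    case True
    have r: "p + q \<in> Hspan (Suc m - 1)" using pq True by (intro Hspan_add) auto
    moreover have "\<forall>y. norm y = 1 \<longrightarrow> h y = (0::complex^'d \<Rightarrow> real) y + (p + q) y"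
      using pq(3) by simp
    ultimately show ?thesis unfolding G_def using Hspan_zero by blast
  next
    case False
    have "?N * q \<in> Hspan (Suc m)"
      using False by (intro Hspan_mult'[OF Hspan_norm pq(2)]) auto
    moreover have "p \<in> Hspan (Suc m - 1)" using pq by simp
    moreover have "\<forall>y. norm y = 1 \<longrightarrow> h y = (?N * q) y + p y"
      using pq(3) by simp
    ultimately show ?thesis unfolding G_def by blast
  qed
qed

lemma G_mono: "m \<le> s \<Longrightarrow> G m h \<Longrightarrow> G s h"
  by (induction s rule: dec_induct) (auto intro: G_up)

lemma G_prod:
  assumes "finite A"
  shows "G (card A) (\<lambda>y. \<Prod>a\<in>A. (Re (cinner x y) - a) / (1 - a))"
  using assms
proof (induction A rule: finite_induct)
  case empty
  have "(\<lambda>_. 1) \<in> (Hspan 0 :: (complex^'d \<Rightarrow> real) set)" by (rule Hspan_const)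
  then show ?case unfolding G_def using Hspan_zero
    by (intro exI[of _ "\<lambda>_. 1"] exI[of _ 0]) auto
next
  case (insert a A)
  have l: "(\<lambda>y. (1 / (1 - a)) * Re (cinner x y)) \<in> Hspan 1"
    by (intro Hspan_scale Hspan_lin)
  have "G (Suc (card A)) (\<lambda>y. ((1 / (1 - a)) * Re (cinner x y) + (- a / (1 - a))) *
      (\<Prod>a\<in>A. (Re (cinner x y) - a) / (1 - a)))"
    by (rule G_step[OF insert.IH l])
  moreover have "(\<lambda>y. ((1 / (1 - a)) * Re (cinner x y) + (- a / (1 - a))) *
      (\<Prod>a\<in>A. (Re (cinner x y) - a) / (1 - a))) = (\<lambda>y. \<Prod>a\<in>insert a A. (Re (cinner x y) - a) / (1 - a))"
    using insert.hyps by (simp add: fun_eq_iff diff_divide_distrib)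
  ultimately show ?case using insert.hyps by simp
qed

definition Rst :: "nat \<Rightarrow> (nat \<Rightarrow> complex^'d) \<Rightarrow> (complex^'d \<Rightarrow> real) \<Rightarrow> nat \<Rightarrow> real" where
  "Rst n w p = (\<lambda>k. if k < n then p (w k) else 0)"

lemma Rst_span:
  assumes "p \<in> fvs.span (mon ` B)"
  shows "Rst n w p \<in> fvs.span ((\<lambda>M. Rst n w (mon M)) ` B)"
  using assms
proof (induction rule: fvs.span_induct_alt)
  case base
  have "Rst n w (\<lambda>_. 0) = 0" by (simp add: Rst_def fun_eq_iff)
  then show ?case using fvs.span_zero by (simp add: zero_fun_def)
next
  case (step c x y)
  then obtain M where M: "M \<in> B" "x = mon M" by auto
  have "Rst n w (\<lambda>z. c * x z + y z) = (\<lambda>k. c * Rst n w (mon M) k) + Rst n w y"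
    by (simp add: Rst_def fun_eq_iff M)
  moreover have "(\<lambda>k. c * Rst n w (mon M) k) + Rst n w y \<in> fvs.span ((\<lambda>M. Rst n w (mon M)) ` B)"
    using M step by (intro fvs.span_add[OF fvs.span_scale[OF fvs.span_base]]) auto
  ultimately show ?case by (simp add: plus_fun_def)
qed

lemma unit_re_cinner_eq:
  fixes z w :: "complex^'d::finite"
  assumes "norm z = 1" "norm w = 1" "Re (cinner z w) = 1"
  shows "z = w"
proof -
  have "(\<Sum>c\<in>UNIV. (coord c z - coord c w)^2) = (norm z)^2 + (norm w)^2 - 2 * Re (cinner z w)"
    unfolding norm_coord re_cinner_coord
    by (simp add: power2_eq_square algebra_simps sum_subtractf sum.distrib sum_distrib_left)
  also have "\<dots> = 0" using assms by simp
  finally have "\<forall>c\<in>UNIV. (coord c z - coord c w)^2 = 0"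
    by (subst sum_nonneg_eq_0_iff[symmetric]) auto
  then have "(coord c z - coord c w)^2 = 0" for c by blast
  then have "\<And>c. coord c z = coord c w" by simp
  then have "\<And>i. z $ i = w $ i"
    by (metis (full_types) coord_def complex_eqI fst_conv snd_conv)
  then show ?thesis by (simp add: vec_eq_iff)
qed

lemma re_cinner_self: "Re (cinner z z) = (norm z)^2"
  by (simp add: re_cinner_coord norm_coord)

theorem theorem10p5:
  fixes v :: "nat \<Rightarrow> complex^'d" and n s :: nat
  assumes "inj_on v {..<n}"
    and "\<And>j. j < n \<Longrightarrow> norm (v j) = 1"
    and "card (angle_re_values v n) \<le> s"
  shows "n \<le> ((s + 2 * CARD('d) - 1) choose (2 * CARD('d) - 1))
             + ((s + 2 * CARD('d) - 2) choose (2 * CARD('d) - 1))"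
proof -
  let ?A = "angle_re_values v n"
  have "?A \<subseteq> (\<lambda>(j,k). Re (cinner (v j) (v k))) ` ({..<n} \<times> {..<n})"
    by (auto simp: angle_re_values_def)
  then have finA: "finite ?A" by (rule finite_subset) auto
  have A1: "a \<noteq> 1" if "a \<in> ?A" for a
  proof
    assume a1: "a = 1"
    from that obtain j k where jk: "j < n" "k < n" "v j \<noteq> v k" "a = Re (cinner (v j) (v k))"
      by (auto simp: angle_re_values_def)
    then show False using unit_re_cinner_eq[of "v j" "v k"] assms(2) a1 by auto
  qed
  define f where "f j = (\<lambda>y. \<Prod>a\<in>?A. (Re (cinner (v j) y) - a) / (1 - a))" for j
  have f_off: "f j (v k) = 0" if "j < n" "k < n" "j \<noteq> k" for j k
  proof -
    have "v j \<noteq> v k" using assms(1) that by (auto dest: inj_onD)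
    then have mem: "Re (cinner (v j) (v k)) \<in> ?A"
      using that unfolding angle_re_values_def by blast
    show ?thesis unfolding f_def using finA mem
      by (subst prod_zero_iff) auto
  qed
  have f_on: "f j (v j) = 1" if "j < n" for j
  proof -
    have "Re (cinner (v j) (v j)) = 1" using assms(2)[OF that] by (simp add: re_cinner_self)
    then show ?thesis unfolding f_def using A1 by (intro prod.neutral) auto
  qed
  have Gs: "G s (f j)" for j
    unfolding f_def by (rule G_mono[OF assms(3) G_prod[OF finA]])
  define F where "F j = Rst n v (f j)" for j
  define T where "T = (\<lambda>M. Rst n v (mon M)) ` (Ms s \<union> Ms (s - 1))"
  have finT: "finite T" unfolding T_def using finite_Ms by auto
  have FT: "F j \<in> fvs.span T" for j
  proof -
    obtain p q where pq: "p \<in> Hspan s" "q \<in> Hspan (s - 1)" "\<And>y. norm y = 1 \<Longrightarrow> f j y = p y + q y"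
      using Gs[of j] unfolding G_def by blast
    have "F j = Rst n v p + Rst n v q"
      using pq(3) assms(2) by (auto simp: F_def Rst_def fun_eq_iff)
    moreover have "Rst n v p \<in> fvs.span T"
      using Rst_span[of p "Ms s" n v] pq(1) unfolding Hspan_def T_def
      using fvs.span_mono[of "(\<lambda>M. Rst n v (mon M)) ` Ms (s)" "(\<lambda>M. Rst n v (mon M)) ` (Ms s \<union> Ms (s - 1))"]
      by blast
    moreover have "Rst n v q \<in> fvs.span T"
      using Rst_span[of q "Ms (s - 1)" n v] pq(2) unfolding Hspan_def T_def
      using fvs.span_mono[of "(\<lambda>M. Rst n v (mon M)) ` Ms (s - 1)" "(\<lambda>M. Rst n v (mon M)) ` (Ms s \<union> Ms (s - 1))"]
      by blast
    ultimately show ?thesis using fvs.span_add by (simp add: plus_fun_def)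
  qed
  have Fjk: "F j k = (if j = k then 1 else 0)" if "j < n" "k < n" for j k
    using that f_on f_off by (auto simp: F_def Rst_def)
  have injF: "inj_on F {..<n}"
  proof (rule inj_onI)
    fix j k assume "j \<in> {..<n}" "k \<in> {..<n}" "F j = F k"
    then have "F j j = F k j" by simp
    with \<open>j \<in> {..<n}\<close> \<open>k \<in> {..<n}\<close> Fjk show "j = k" by (auto split: if_splits)
  qed
  have indep: "fvs.independent (F ` {..<n})"
  proof (rule fvs.independent_if_scalars_zero)
    show "finite (F ` {..<n})" by auto
  next
    fix g x
    assume sum0: "(\<Sum>x\<in>F ` {..<n}. (\<lambda>xa. g x * x xa)) = 0" and x: "x \<in> F ` {..<n}"
    from x obtain j where j: "j < n" "x = F j" by auto
    have "0 = (\<Sum>x\<in>F ` {..<n}. (\<lambda>xa. g x * x xa)) j" using sum0 by simp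
    also have "\<dots> = (\<Sum>x\<in>F ` {..<n}. g x * x j)" by (simp add: sum_fun_apply)
    also have "\<dots> = (\<Sum>k<n. g (F k) * F k j)" by (simp add: sum.reindex[OF injF])
    also have "\<dots> = (\<Sum>k<n. if k = j then g (F k) else 0)"
      using Fjk j by (intro sum.cong refl) auto
    also have "\<dots> = g (F j)" using j by simp
    finally show "g x = 0" using j by simp
  qed
  have "card (F ` {..<n}) \<le> card T"
    using fvs.independent_span_bound[OF finT indep] FT by auto
  then have nT: "n \<le> card T" using card_image[OF injF] by simp
  have "card T \<le> card (Ms s \<union> Ms (s - 1) :: ('d \<times> bool) multiset set)"
    unfolding T_def by (rule card_image_le) (use finite_Ms in auto)
  with nT have nM: "n \<le> card (Ms s \<union> Ms (s - 1) :: ('d \<times> bool) multiset set)" by linarith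
  have D: "CARD('d) \<ge> 1" by (simp add: Suc_le_eq)
  show ?thesis
  proof (cases "s = 0")
    case True
    then have "n \<le> 1" using nM by (simp add: card_Ms)
    moreover have "((s + 2 * CARD('d) - 1) choose (2 * CARD('d) - 1)) = 1" using True by simp
    ultimately show ?thesis by linarith
  next
    case False
    have "card (Ms s \<union> Ms (s - 1) :: ('d \<times> bool) multiset set) \<le> card (Ms s :: ('d \<times> bool) multiset set) + card (Ms (s - 1) :: ('d \<times> bool) multiset set)"
      by (rule card_Un_le)
    also have "\<dots> = ((2 * CARD('d) + s - 1) choose s) + ((2 * CARD('d) + (s - 1) - 1) choose (s - 1))"
      by (simp add: card_Ms)
    also have "(2 * CARD('d) + s - 1) choose s = (s + 2 * CARD('d) - 1) choose (2 * CARD('d) - 1)"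
    proof -
      have "(2 * CARD('d) + s - 1) choose s = (2 * CARD('d) + s - 1) choose (2 * CARD('d) + s - 1 - s)"
        by (intro binomial_symmetric) (use D in linarith)
      also have "2 * CARD('d) + s - 1 - s = 2 * CARD('d) - 1" using D by simp
      finally show ?thesis by (simp add: add.commute)
    qed
    also have "(2 * CARD('d) + (s - 1) - 1) choose (s - 1) = (s + 2 * CARD('d) - 2) choose (2 * CARD('d) - 1)"
    proof -
      have e: "2 * CARD('d) + (s - 1) - 1 = s + 2 * CARD('d) - 2" using False by simp
      have "(s + 2 * CARD('d) - 2) choose (s - 1) = (s + 2 * CARD('d) - 2) choose (s + 2 * CARD('d) - 2 - (s - 1))"
        by (intro binomial_symmetric) (use D False in linarith)
      also have "s + 2 * CARD('d) - 2 - (s - 1) = 2 * CARD('d) - 1" using D False by simp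
      finally show ?thesis unfolding e .
    qed
    finally show ?thesis using nM by linarith
  qed
qed

end
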